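(* Consider the setting and algorithm described in the context. Let $\gamma>0$ and $K_0\ge0$ be such that for all $k\ge K_0$: $\gamma_k=\gamma$, $\delta_k=\delta:=2\nu+L_{\nabla h}+\frac{2\|A\|^2}{\gamma}$ and $\|z^{k+1}\|\le\min\left(\frac{\varepsilon}{\gamma},\sqrt{\frac{2\varepsilon}{\gamma}}\right)$. Let $c_1:=\nu$, $c_2:=\frac{\delta(2-\beta)}{2\beta}$, $c_3:=\frac{\gamma}{2}$. Then for all $k\ge K_0+1$: (i) $\Psi(x^{k+1},z^{k+1},u^{k+1},\delta,\gamma)+\theta_kf(Kx^k)-\theta_k\big(\langle Kx^{k+1},y^{k+1}\rangle-f^*(y^{k+1})\big)\le \Psi(x^k,z^k,u^k,\delta,\gamma)-c_1\|x^k-x^{k+1}\|^2-c_2\|u^k-u^{k+1}\|^2-c_3\|z^k-z^{k+1}\|^2$; (ii) $\Psi(x^{k+1},z^{k+1},u^{k+1},\delta,\gamma)-\theta_kf(Kx^{k+1})\le -c_1\|x^k-x^{k+1}\|^2-c_2\|u^k-u^{k+1}\|^2-c_3\|z^k-z^{k+1}\|^2$.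
   Context: Setting: $\mathcal{S}\subseteq\mathbb{R}^n$ nonempty, convex, compact; $A:\mathbb{R}^n\to\mathbb{R}^s$, $K:\mathbb{R}^n\to\mathbb{R}^p$ linear with adjoints $A^*,K^*$ and operator norm $\|A\|$; $g:\mathbb{R}^s\to\mathbb{R}\cup\{+\infty\}$ proper, convex, lsc; $h:\mathbb{R}^n\to\mathbb{R}$ differentiable on an open set containing $\mathcal{S}$ with $L_{\nabla h}$-Lipschitz gradient there; $f:\mathbb{R}^p\to\mathbb{R}\cup\{+\infty\}$ proper, convex, lsc with $K(\mathcal{S})\subseteq\operatorname{int}(\operatorname{dom}f)$ and $f(Kx)>0$ on $\mathcal{S}$; $\mathcal{S}\cap A^{-1}(\operatorname{dom}g)\ne\emptyset$, $\inf_{x\in\mathcal{S}}\{g(Ax)+h(x)\}>0$; $A(\mathcal{S})\subseteq\operatorname{dom}(\partial g)$ and there is $\ell>0$ with $\operatorname{dist}(0,\partial g(Ax))\le\ell$ for all $x\in\mathcal{S}$. Notation: $f^*,g^*$ Fenchel conjugates; $\iota_{\mathcal{S}}$ indicator; $\operatorname{Proj}_{\mathcal{S}}$ projection; $\operatorname{prox}_{\varphi,\kappa}(x)=\arg\min_y\{\varphi(y)+\frac1{2\kappa}\|y-x\|^2\}$; $\Psi(x,z,u,\delta,\gamma):=\langle z,Ax\rangle-g^*(z)+h(x)+\iota_{\mathcal{S}}(x)+\frac{\delta}{2}\|x-u\|^2-\frac{\gamma}{2}\|z\|^2$. Algorithm: given $0<\beta<2$, $\nu>0$, $0<q<1$,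 $\delta_0,\theta_0>0$, $\gamma_0=1$, $\varepsilon>0$ and $(x^0,z^0,u^0)$, for $k\ge0$: choose $y^{k+1}\in\partial f(Kx^k)$; $x^{k+1}:=\operatorname{Proj}_{\mathcal{S}}(u^k+\frac{\theta_k}{\delta_k}K^*y^{k+1}-\frac1{\delta_k}\nabla h(x^k)-\frac1{\delta_k}A^*z^k)$; $u^{k+1}:=(1-\beta)u^k+\beta x^{k+1}$; take the smallest $j_k\ge0$ such that with $\gamma_{k,j_k}:=\gamma_kq^{j_k}$, $z^{k+1,j_k}:=\operatorname{prox}_{g^*,1/\gamma_{k,j_k}}(Ax^{k+1}/\gamma_{k,j_k})$ one has $\theta_{k+1}:=\Psi(x^{k+1},z^{k+1,j_k},u^{k+1},\delta_k,\gamma_{k,j_k})/f(Kx^{k+1})>0$; set $\gamma_{k+1}:=\gamma_{k,j_k}$, $\delta_{k+1}:=2\nu+L_{\nabla h}+2\|A\|^2/\gamma_{k+1}$, $z^{k+1}:=z^{k+1,j_k}$; if $\|z^{k+1}\|>\min(\varepsilon/\gamma_{k+1},\sqrt{2\varepsilon/\gamma_{k+1}})$, replace $\gamma_{k+1}$ by $\gamma_{k+1}q$ and recompute $\delta_{k+1}$ by the same formula. *)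

theory Defs
  imports "HOL-Analysis.Analysis"
begin

text \<open>Extended-real-valued convex analysis notions (functions into R \<union> {+inf} are
modelled as ereal-valued functions).\<close>

definition eff_dom :: "('a \<Rightarrow> ereal) \<Rightarrow> 'a set" where
  "eff_dom f = {x. f x < \<infinity>}"

definition proper_fun :: "('a \<Rightarrow> ereal) \<Rightarrow> bool" where
  "proper_fun f \<longleftrightarrow> (\<forall>x. f x \<noteq> -\<infinity>) \<and> (\<exists>x. f x \<noteq> \<infinity>)"

definition epi :: "('a \<Rightarrow> ereal) \<Rightarrow> ('a \<times> real) set" where
  "epi f = {(x, t). f x \<le> ereal t}"

definition convex_fun :: "('a::real_vector \<Rightarrow> ereal) \<Rightarrow> bool" where
  "convex_fun f \<longleftrightarrow> convex (epi f)"

definition lsc_fun :: "('a::topological_space \<Rightarrow> ereal) \<Rightarrow> bool" where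
  "lsc_fun f \<longleftrightarrow> closed (epi f)"

definition fconj :: "('a::real_inner \<Rightarrow> ereal) \<Rightarrow> 'a \<Rightarrow> ereal" where
  "fconj f y = (SUP x. ereal (inner y x) - f x)"

definition subdiff :: "('a::real_inner \<Rightarrow> ereal) \<Rightarrow> 'a \<Rightarrow> 'a set" where
  "subdiff f x = {v. f x < \<infinity> \<and> (\<forall>w. f x + ereal (inner v (w - x)) \<le> f w)}"

definition subdiff_dom :: "('a::real_inner \<Rightarrow> ereal) \<Rightarrow> 'a set" where
  "subdiff_dom f = {x. subdiff f x \<noteq> {}}"

definition prox :: "('a::real_normed_vector \<Rightarrow> ereal) \<Rightarrow> real \<Rightarrow> 'a \<Rightarrow> 'a" where
  "prox phi kappa x = (SOME y. \<forall>w. phi y + ereal ((norm (y - x))\<^sup>2 / (2 * kappa))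
                                   \<le> phi w + ereal ((norm (w - x))\<^sup>2 / (2 * kappa)))"

text \<open>Psi(x,z,u,delta,gamma) = <z,Ax> - g*(z) + h(x) + iota_S(x) + delta/2 |x-u|^2 - gamma/2 |z|^2\<close>
definition Psi :: "'n::real_inner set \<Rightarrow> ('n \<Rightarrow> 's::real_inner) \<Rightarrow> ('s \<Rightarrow> ereal) \<Rightarrow> ('n \<Rightarrow> real)
    \<Rightarrow> 'n \<Rightarrow> 's \<Rightarrow> 'n \<Rightarrow> real \<Rightarrow> real \<Rightarrow> ereal" where
  "Psi S A g h x z u d gm =
     (if x \<in> S then ereal (inner z (A x) + h x + d / 2 * (norm (x - u))\<^sup>2 - gm / 2 * (norm z)\<^sup>2)
                     - fconj g z
      else \<infinity>)"

end

theory Submission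
  imports Defs
begin

lemma descent_lemma:
  fixes h :: "'n::euclidean_space \<Rightarrow> real"
  assumes cS: "convex S" and SU: "S \<subseteq> U"
    and hd: "\<And>v. v\<in>U \<Longrightarrow> (h has_derivative (\<lambda>w. inner (gradh v) w)) (at v)"
    and lip: "lipschitz_on L U gradh" and aS: "a\<in>S" and bS: "b\<in>S"
  shows "h b \<le> h a + inner (gradh a) (b - a) + L/2 * (norm (b-a))\<^sup>2"
proof -
  define d where "d = b - a"
  define \<psi> where "\<psi> t = h (a + t *\<^sub>R d) - t * inner (gradh a) d - L/2 * t\<^sup>2 * (norm d)\<^sup>2" for t
  have L0: "0 \<le> L" using lip by (simp add: lipschitz_on_def)
  have inS: "a + t *\<^sub>R d \<in> S" if "0 \<le> t" "t \<le> 1" for t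
  proof -
    have "a + t *\<^sub>R d = (1 - t) *\<^sub>R a + t *\<^sub>R b" by (simp add: d_def algebra_simps)
    thus ?thesis using convexD_alt[OF cS aS bS] that by simp
  qed
  have "\<psi> 1 \<le> \<psi> 0"
  proof (rule DERIV_nonpos_imp_nonincreasing[of 0 1 \<psi>])
    fix t :: real assume t: "0 \<le> t" "t \<le> 1"
    let ?v = "a + t *\<^sub>R d"
    have vU: "?v \<in> U" using inS[OF t] SU by auto
    have l1: "((\<lambda>s. a + s *\<^sub>R d) has_derivative (\<lambda>s. s *\<^sub>R d)) (at t)"
      by (auto intro!: derivative_eq_intros)
    have "((\<lambda>s. h (a + s *\<^sub>R d)) has_derivative (\<lambda>s. inner (gradh ?v) (s *\<^sub>R d))) (at t)"
      using has_derivative_compose[OF l1 hd[OF vU]] by (simp add: o_def)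
    moreover have "(\<lambda>s. inner (gradh ?v) (s *\<^sub>R d)) = (*) (inner (gradh ?v) d)"
      by (rule ext) simp
    ultimately have l2: "((\<lambda>s. h (a + s *\<^sub>R d)) has_real_derivative inner (gradh ?v) d) (at t)"
      by (simp add: has_field_derivative_def)
    have l3: "(\<psi> has_real_derivative (inner (gradh ?v) d - inner (gradh a) d - L/2 * (2 * t) * (norm d)\<^sup>2)) (at t)"
      unfolding \<psi>_def
      by (rule derivative_eq_intros l2 refl | simp)+
    have "inner (gradh ?v) d - inner (gradh a) d = inner (gradh ?v - gradh a) d"
      by (simp add: inner_diff_left)
    also have "\<dots> \<le> norm (gradh ?v - gradh a) * norm d" by (rule norm_cauchy_schwarz)
    also have "norm (gradh ?v - gradh a) \<le> L * norm (?v - a)"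
    proof -
      have "a \<in> U" using aS SU by auto
      thus ?thesis using lip vU unfolding lipschitz_on_def dist_norm by blast
    qed
    hence "norm (gradh ?v - gradh a) * norm d \<le> L * norm (?v - a) * norm d"
      by (simp add: mult_right_mono)
    also have "L * norm (?v - a) * norm d = L * t * (norm d)\<^sup>2" using t by (simp add: power2_eq_square)
    finally have "inner (gradh ?v) d - inner (gradh a) d - L/2 * (2 * t) * (norm d)\<^sup>2 \<le> 0" by simp
    thus "\<exists>y. (\<psi> has_real_derivative y) (at t) \<and> y \<le> 0" using l3 by blast
  qed simp
  thus ?thesis by (simp add: \<psi>_def d_def)
qed

lemma fy: "ereal (inner y w) - f w \<le> fconj f y"
  unfolding fconj_def by (rule SUP_upper) simp

lemma fconj_nm: assumes "proper_fun g" shows "fconj g w \<noteq> -\<infinity>"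
proof -
  obtain x0 where x0: "g x0 \<noteq> \<infinity>" using assms unfolding proper_fun_def by auto
  have "g x0 \<noteq> -\<infinity>" using assms unfolding proper_fun_def by auto
  then obtain b where "g x0 = ereal b" using x0 by (cases "g x0") auto
  hence "ereal (inner w x0 - b) \<le> fconj g w" using fy[of w x0 g] by simp
  thus ?thesis by auto
qed

lemma fconj_subgrad:
  assumes "y \<in> subdiff f v" "f v = ereal fv"
  shows "fconj f y = ereal (inner y v - fv)"
proof (rule antisym)
  show "fconj f y \<le> ereal (inner y v - fv)"
    unfolding fconj_def
  proof (rule SUP_least)
    fix w
    have "f v + ereal (inner y (w - v)) \<le> f w" using assms(1) unfolding subdiff_def by auto
    hence le: "ereal (fv + inner y (w - v)) \<le> f w" using assms(2) by simp
    show "ereal (inner y w) - f w \<le> ereal (inner y v - fv)"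
    proof (cases "f w")
      case (real r)
      thus ?thesis using le by (simp add: inner_diff_right)
    qed (use le in auto)
  qed
  show "ereal (inner y v - fv) \<le> fconj f y" using fy[of y v f] assms(2) by simp
qed

lemma fconj_convex:
  assumes "proper_fun g" "fconj g a = ereal Ga" "fconj g b = ereal Gb" "0 \<le> t" "t \<le> 1"
  shows "fconj g ((1 - t) *\<^sub>R a + t *\<^sub>R b) \<le> ereal ((1 - t) * Ga + t * Gb)"
  unfolding fconj_def
proof (rule SUP_least)
  fix x
  show "ereal (inner ((1 - t) *\<^sub>R a + t *\<^sub>R b) x) - g x \<le> ereal ((1 - t) * Ga + t * Gb)"
  proof (cases "g x")
    case (real r)
    have 1: "inner a x - r \<le> Ga" using fy[of a x g] assms(2) real by simp
    have 2: "inner b x - r \<le> Gb" using fy[of b x g] assms(3) real by simp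
    have "inner ((1 - t) *\<^sub>R a + t *\<^sub>R b) x - r = (1-t) * (inner a x - r) + t * (inner b x - r)"
      by (simp add: inner_add_left algebra_simps)
    also have "\<dots> \<le> (1 - t) * Ga + t * Gb"
      using 1 2 assms(4,5) by (intro add_mono mult_left_mono) auto
    finally show ?thesis using real by simp
  next
    case PInf thus ?thesis by simp
  next
    case MInf thus ?thesis using assms(1) unfolding proper_fun_def by auto
  qed
qed

lemma le_eps_lemma:
  fixes A B C :: real
  assumes "\<And>t. 0 < t \<Longrightarrow> t \<le> 1 \<Longrightarrow> A \<le> B + t * C" "0 \<le> C"
  shows "A \<le> B"
proof (rule field_le_epsilon)
  fix e :: real assume e: "0 < e"
  define t where "t = min 1 (e / (C + 1))"
  have t: "0 < t" "t \<le> 1" using e assms(2) by (auto simp: t_def)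
  have "t * C \<le> e / (C + 1) * C" using assms(2) by (intro mult_right_mono) (auto simp: t_def)
  also have "\<dots> \<le> e" using e assms(2) by (simp add: field_simps)
  finally show "A \<le> B + e" using assms(1)[OF t] by simp
qed

lemma norm_add_sq: "(norm (a + b))\<^sup>2 = (norm a)\<^sup>2 + 2 * inner a b + (norm (b::'a::real_inner))\<^sup>2"
  using dot_norm[of a b] by simp

lemma norm_add_sq_t: "(norm (a + t *\<^sub>R b))\<^sup>2 = (norm a)\<^sup>2 + 2 * t * inner a b + t\<^sup>2 * (norm (b::'a::real_inner))\<^sup>2"
  using norm_add_sq[of a "t *\<^sub>R b"] by (simp add: power_mult_distrib)

lemma prox_strong:
  fixes c :: "'a::real_inner"
  assumes pg: "proper_fun g" and kp: "0 < \<kappa>"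
    and mn: "\<And>w. fconj g z + ereal ((norm (z - c))\<^sup>2 / (2 * \<kappa>)) \<le> fconj g w + ereal ((norm (w - c))\<^sup>2 / (2 * \<kappa>))"
    and wf: "fconj g w = ereal Gw"
  shows "\<exists>Gz. fconj g z = ereal Gz \<and>
     Gz + (norm (z - c))\<^sup>2 / (2 * \<kappa>) + (norm (w - z))\<^sup>2 / (2 * \<kappa>) \<le> Gw + (norm (w - c))\<^sup>2 / (2 * \<kappa>)"
proof -
  have "fconj g z \<noteq> \<infinity>" using mn[of w] wf by auto
  moreover have "fconj g z \<noteq> -\<infinity>" using fconj_nm[OF pg] .
  ultimately obtain Gz where Gz: "fconj g z = ereal Gz" by (cases "fconj g z") auto
  define n where "n v = (norm (v - c))\<^sup>2 / (2 * \<kappa>)" for v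
  have key: "Gz \<le> Gw + inner (z - c) (w - z) / \<kappa>"
  proof (rule le_eps_lemma)
    show "0 \<le> (norm (w - z))\<^sup>2 / (2 * \<kappa>)" using kp by simp
    fix t :: real assume t: "0 < t" "t \<le> 1"
    let ?wt = "(1 - t) *\<^sub>R z + t *\<^sub>R w"
    have "fconj g z + ereal (n z) \<le> fconj g ?wt + ereal (n ?wt)" using mn[of ?wt] by (simp add: n_def)
    also have "\<dots> \<le> ereal ((1 - t) * Gz + t * Gw) + ereal (n ?wt)"
      using fconj_convex[OF pg Gz wf, of t] t by (intro add_right_mono) auto
    finally have "Gz + n z \<le> (1 - t) * Gz + t * Gw + n ?wt" using Gz by simp
    moreover have "n ?wt = ((norm (z - c))\<^sup>2 + 2 * t * inner (z - c) (w - z) + t\<^sup>2 * (norm (w - z))\<^sup>2) / (2 * \<kappa>)"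
    proof -
      have "?wt - c = (z - c) + t *\<^sub>R (w - z)" by (simp add: algebra_simps)
      hence "(norm (?wt - c))\<^sup>2 = (norm ((z - c) + t *\<^sub>R (w - z)))\<^sup>2" by metis
      also have "\<dots> = (norm (z - c))\<^sup>2 + 2 * t * inner (z - c) (w - z) + t\<^sup>2 * (norm (w - z))\<^sup>2"
        by (rule norm_add_sq_t)
      finally have "(norm (?wt - c))\<^sup>2 = (norm (z - c))\<^sup>2 + 2 * t * inner (z - c) (w - z) + t\<^sup>2 * (norm (w - z))\<^sup>2" .
      thus ?thesis by (simp add: n_def)
    qed
    ultimately have A: "Gz + n z \<le> (1 - t) * Gz + t * Gw + ((norm (z - c))\<^sup>2 + 2 * t * inner (z - c) (w - z) + t\<^sup>2 * (norm (w - z))\<^sup>2) / (2 * \<kappa>)"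
      by simp
    have B: "((norm (z - c))\<^sup>2 + 2 * t * inner (z - c) (w - z) + t\<^sup>2 * (norm (w - z))\<^sup>2) / (2 * \<kappa>)
       = n z + t * (inner (z - c) (w - z) / \<kappa> + t * ((norm (w - z))\<^sup>2 / (2 * \<kappa>)))"
      using kp by (simp add: n_def field_simps power2_eq_square)
    have "t * Gz \<le> t * (Gw + inner (z - c) (w - z) / \<kappa> + t * ((norm (w - z))\<^sup>2 / (2 * \<kappa>)))"
      using A unfolding B by (simp add: algebra_simps)
    thus "Gz \<le> Gw + inner (z - c) (w - z) / \<kappa> + t * ((norm (w - z))\<^sup>2 / (2 * \<kappa>))"
      using t by simp
  qed
  have e: "(norm (w - c))\<^sup>2 = (norm (z - c))\<^sup>2 + 2 * inner (z - c) (w - z) + (norm (w - z))\<^sup>2"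
  proof -
    have "w - c = (z - c) + (w - z)" by simp
    hence "(norm (w - c))\<^sup>2 = (norm ((z - c) + (w - z)))\<^sup>2" by metis
    also have "\<dots> = (norm (z - c))\<^sup>2 + 2 * inner (z - c) (w - z) + (norm (w - z))\<^sup>2"
      by (rule norm_add_sq)
    finally show ?thesis .
  qed
  have "Gz + (norm (z - c))\<^sup>2 / (2 * \<kappa>) + (norm (w - z))\<^sup>2 / (2 * \<kappa>) \<le> Gw + (norm (w - c))\<^sup>2 / (2 * \<kappa>)"
  proof -
    have "((norm (z - c))\<^sup>2 + 2 * inner (z - c) (w - z) + (norm (w - z))\<^sup>2) / (2 * \<kappa>)
      = (norm (z - c))\<^sup>2 / (2 * \<kappa>) + inner (z - c) (w - z) / \<kappa> + (norm (w - z))\<^sup>2 / (2 * \<kappa>)"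
      using kp by (simp add: add_divide_distrib)
    thus ?thesis using key unfolding e by linarith
  qed
  thus ?thesis using Gz by blast
qed

lemma quad_bound:
  fixes s a k :: real assumes "0 < k"
  shows "s\<^sup>2 / (4 * k) - k * a\<^sup>2 \<le> s\<^sup>2 / (2 * k) - a * s"
proof -
  have "0 \<le> (s - 2 * k * a)\<^sup>2 / (4 * k)" using assms by simp
  also have "(s - 2 * k * a)\<^sup>2 / (4 * k) = s\<^sup>2 / (4 * k) - a * s + k * a\<^sup>2"
    using assms by (simp add: field_simps power2_eq_square)
  finally have "0 \<le> s\<^sup>2 / (4 * k) - a * s + k * a\<^sup>2" .
  moreover have "s\<^sup>2 / (2 * k) = s\<^sup>2 / (4 * k) + s\<^sup>2 / (4 * k)" using assms by (simp add: field_simps)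
  moreover have "0 \<le> s\<^sup>2 / (4 * k)" using assms by simp
  ultimately show ?thesis by linarith
qed

lemma prox_exists:
  fixes c :: "'a::euclidean_space"
  assumes pg: "proper_fun g" and kp: "0 < \<kappa>" and w0: "fconj g w0 \<noteq> \<infinity>"
  shows "\<exists>y. \<forall>w. fconj g y + ereal ((norm (y - c))\<^sup>2 / (2 * \<kappa>)) \<le> fconj g w + ereal ((norm (w - c))\<^sup>2 / (2 * \<kappa>))"
proof -
  define n where "n v = (norm (v - c))\<^sup>2 / (2 * \<kappa>)" for v
  define F where "F w = fconj g w + ereal (n w)" for w
  obtain x0 where x0: "g x0 \<noteq> \<infinity>" using pg unfolding proper_fun_def by auto
  have "g x0 \<noteq> -\<infinity>" using pg unfolding proper_fun_def by auto
  then obtain b where b: "g x0 = ereal b" using x0 by (cases "g x0") auto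
  define a where "a = norm x0"
  define M0 where "M0 = - \<kappa> * a\<^sup>2 - a * norm c - b"
  have lowr: "(norm (w - c))\<^sup>2 / (4 * \<kappa>) + M0 \<le> inner w x0 - b + n w" for w
  proof -
    have "inner w x0 = inner (w - c) x0 + inner c x0" by (simp add: inner_diff_left)
    moreover have "- (norm (w - c) * a) \<le> inner (w - c) x0"
      using Cauchy_Schwarz_ineq2[of "w - c" x0] unfolding a_def by linarith
    moreover have "- (norm c * a) \<le> inner c x0"
      using Cauchy_Schwarz_ineq2[of c x0] unfolding a_def by linarith
    moreover have "(norm (w - c))\<^sup>2 / (4 * \<kappa>) - \<kappa> * a\<^sup>2 \<le> (norm (w - c))\<^sup>2 / (2 * \<kappa>) - a * norm (w - c)"
      by (rule quad_bound[OF kp])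
    ultimately show ?thesis unfolding n_def M0_def by (simp add: algebra_simps)
  qed
  have low: "ereal ((norm (w - c))\<^sup>2 / (4 * \<kappa>) + M0) \<le> F w" for w
  proof -
    have "ereal (inner w x0 - b) \<le> fconj g w" using fy[of w x0 g] b by simp
    hence "ereal (inner w x0 - b) + ereal (n w) \<le> F w" unfolding F_def by (rule add_right_mono)
    thus ?thesis using lowr[of w] by (metis order_trans ereal_less_eq(3) plus_ereal.simps(1))
  qed
  define m where "m = (INF w. F w)"
  have "ereal M0 \<le> m" unfolding m_def
  proof (rule INF_greatest)
    fix w show "ereal M0 \<le> F w" using low[of w] kp
      by (metis order_trans ereal_less_eq(3) le_add_same_cancel2 divide_nonneg_pos zero_le_power2 zero_less_mult_iff zero_less_numeral)
  qed
  moreover have "m \<le> F w0" unfolding m_def by (rule INF_lower) simp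
  moreover have "F w0 \<noteq> \<infinity>" using w0 fconj_nm[OF pg, of w0] unfolding F_def by (cases "fconj g w0") auto
  ultimately obtain mr where mr: "m = ereal mr" by (cases m) auto
  have "\<forall>k. \<exists>w. F w < ereal (mr + inverse (real (Suc k)))"
  proof
    fix k
    have "m < ereal (mr + inverse (real (Suc k)))" using mr by simp
    thus "\<exists>w. F w < ereal (mr + inverse (real (Suc k)))" unfolding m_def INF_less_iff by auto
  qed
  then obtain ws where ws: "\<And>k. F (ws k) < ereal (mr + inverse (real (Suc k)))" by metis
  define B where "B = 4 * \<kappa> * (mr + 1 - M0)"
  have bnd: "norm (ws k) \<le> norm c + max 1 B" for k
  proof -
    have "inverse (real (Suc k)) \<le> 1" by (simp add: inverse_le_1_iff)
    hence "ereal ((norm (ws k - c))\<^sup>2 / (4 * \<kappa>) + M0) < ereal (mr + 1)"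
    proof -
      have "ereal (mr + inverse (real (Suc k))) \<le> ereal (mr + 1)" using \<open>inverse (real (Suc k)) \<le> 1\<close> by simp
      thus ?thesis using low[of "ws k"] ws[of k] by (meson le_less_trans less_le_trans)
    qed
    hence "(norm (ws k - c))\<^sup>2 / (4 * \<kappa>) < mr + 1 - M0" by simp
    hence s2: "(norm (ws k - c))\<^sup>2 \<le> B" using kp unfolding B_def by (simp add: field_simps)
    have "norm (ws k - c) \<le> max 1 B"
    proof (cases "norm (ws k - c) \<le> 1")
      case False
      hence "norm (ws k - c) * 1 \<le> norm (ws k - c) * norm (ws k - c)"
        by (intro mult_left_mono) auto
      hence "norm (ws k - c) \<le> (norm (ws k - c))\<^sup>2" by (simp add: power2_eq_square)
      thus ?thesis using s2 by linarith
    qed simp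
    moreover have "norm (ws k) \<le> norm c + norm (ws k - c)" by (metis norm_triangle_sub add.commute)
    ultimately show ?thesis by linarith
  qed
  have "bounded (range ws)" unfolding bounded_iff using bnd by blast
  then obtain l r where r: "strict_mono (r::nat\<Rightarrow>nat)" and lim: "((ws \<circ> r) \<longlongrightarrow> l) sequentially"
    using bounded_imp_convergent_subsequence by blast
  have Fl: "F l \<le> m"
  proof -
    have "fconj g l \<le> ereal (mr - n l)"
      unfolding fconj_def
    proof (rule SUP_least)
      fix x
      show "ereal (inner l x) - g x \<le> ereal (mr - n l)"
      proof (cases "g x")
        case (real gx)
        have "inner l x - gx + n l \<le> mr"
        proof (rule LIMSEQ_le)
          show "(\<lambda>k. inner ((ws \<circ> r) k) x - gx + n ((ws \<circ> r) k)) \<longlonglongrightarrow> inner l x - gx + n l"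
            unfolding n_def using kp by (intro tendsto_intros lim) auto
          show "(\<lambda>k. mr + inverse (real (Suc k))) \<longlonglongrightarrow> mr"
            using tendsto_add[OF tendsto_const LIMSEQ_inverse_real_of_nat, of mr] by simp
          show "\<exists>N. \<forall>k\<ge>N. inner ((ws \<circ> r) k) x - gx + n ((ws \<circ> r) k) \<le> mr + inverse (real (Suc k))"
          proof (intro exI allI impI)
            fix k
            have "ereal (inner (ws (r k)) x) - g x \<le> fconj g (ws (r k))" by (rule fy)
            hence "ereal (inner (ws (r k)) x - gx) + ereal (n (ws (r k))) \<le> F (ws (r k))"
              unfolding F_def using real add_right_mono[of "ereal (inner (ws (r k)) x - gx)" "fconj g (ws (r k))" "ereal (n (ws (r k)))"]
              by simp
            also have "\<dots> < ereal (mr + inverse (real (Suc (r k))))" by (rule ws)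
            finally have 1: "inner (ws (r k)) x - gx + n (ws (r k)) < mr + inverse (real (Suc (r k)))" by simp
            have "k \<le> r k" using seq_suble[OF r] .
            hence "inverse (real (Suc (r k))) \<le> inverse (real (Suc k))"
              by (simp add: le_imp_inverse_le)
            thus "inner ((ws \<circ> r) k) x - gx + n ((ws \<circ> r) k) \<le> mr + inverse (real (Suc k))"
              using 1 unfolding o_def by linarith
          qed
        qed
        thus ?thesis using real by simp
      qed (use pg in \<open>auto simp: proper_fun_def\<close>)
    qed
    hence "fconj g l + ereal (n l) \<le> ereal (mr - n l) + ereal (n l)" by (rule add_right_mono)
    thus ?thesis unfolding F_def mr by simp
  qed
  have "\<forall>w. F l \<le> F w"
  proof
    fix w have "m \<le> F w" unfolding m_def by (rule INF_lower) simp
    thus "F l \<le> F w" using Fl by simp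
  qed
  thus ?thesis unfolding F_def n_def by blast
qed

lemma prox_min:
  fixes c :: "'a::euclidean_space"
  assumes pg: "proper_fun g" and kp: "0 < \<kappa>" and w0: "fconj g w0 \<noteq> \<infinity>"
  shows "fconj g (prox (fconj g) \<kappa> c) + ereal ((norm (prox (fconj g) \<kappa> c - c))\<^sup>2 / (2 * \<kappa>))
     \<le> fconj g w + ereal ((norm (w - c))\<^sup>2 / (2 * \<kappa>))"
  using someI_ex[OF prox_exists[OF assms, of c]] unfolding prox_def by blast

lemma ediv_eq: assumes "0 < fk" "ereal t = P / ereal fk" shows "P = ereal (t * fk)"
  using assms by (cases P) (auto split: if_splits)

lemma sq_prox:
  fixes z a :: "'a::real_inner"
  assumes "0 < \<gamma>"
  shows "(norm (z - (1/\<gamma>) *\<^sub>R a))\<^sup>2 / (2 * (1/\<gamma>)) = \<gamma>/2 * (norm z)\<^sup>2 - inner z a + (norm a)\<^sup>2 / (2 * \<gamma>)"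
proof -
  have "(norm (z - (1/\<gamma>) *\<^sub>R a))\<^sup>2 = (norm (z + (-(1/\<gamma>)) *\<^sub>R a))\<^sup>2" by simp
  also have "\<dots> = (norm z)\<^sup>2 - 2 * (1/\<gamma>) * inner z a + (1/\<gamma>)\<^sup>2 * (norm a)\<^sup>2"
    unfolding norm_add_sq_t by simp
  finally show ?thesis using assms by (simp add: field_simps power2_eq_square)
qed

lemma cross_bound:
  fixes g t a b c :: real
  assumes "0 < g" "g * a\<^sup>2 \<le> t" "t \<le> a * b" "b \<le> c" "0 \<le> a" "0 \<le> b"
  shows "t \<le> c\<^sup>2 / g"
proof (cases "a = 0")
  case True thus ?thesis using assms by simp
next
  case False
  hence ap: "0 < a" using assms by simp
  have "a * (g * a) \<le> a * b" using assms by (simp add: power2_eq_square mult_ac)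
  hence "g * a \<le> b" using ap by simp
  hence "a \<le> b / g" using assms(1) by (simp add: field_simps)
  hence "a * b \<le> b / g * b" using assms(6) by (rule mult_right_mono)
  also have "\<dots> = b\<^sup>2 / g" by (simp add: power2_eq_square)
  also have "\<dots> \<le> c\<^sup>2 / g" using assms by (intro divide_right_mono power_mono) auto
  finally show ?thesis using assms(3) by simp
qed

theorem theorem5p2:
  fixes S :: "'n::euclidean_space set"
    and A :: "'n \<Rightarrow> 's::euclidean_space" and K :: "'n \<Rightarrow> 'p::euclidean_space"
    and g :: "'s \<Rightarrow> ereal" and f :: "'p \<Rightarrow> ereal"
    and h :: "'n \<Rightarrow> real" and gradh :: "'n \<Rightarrow> 'n" and L :: real and U :: "'n set"
    and ell :: real
    and \<beta> \<nu> q \<epsilon> :: real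
    and x u :: "nat \<Rightarrow> 'n" and z :: "nat \<Rightarrow> 's" and y :: "nat \<Rightarrow> 'p"
    and \<theta> \<delta> \<gamma>s :: "nat \<Rightarrow> real" and jj :: "nat \<Rightarrow> nat"
    and \<gamma> :: real and K0 :: nat
  assumes S: "S \<noteq> {}" "convex S" "compact S"
    and lin: "linear A" "linear K"
    and g: "proper_fun g" "convex_fun g" "lsc_fun g"
    and h: "open U" "S \<subseteq> U" "\<And>v. v \<in> U \<Longrightarrow> (h has_derivative (\<lambda>w. inner (gradh v) w)) (at v)"
           "lipschitz_on L U gradh"
    and f: "proper_fun f" "convex_fun f" "lsc_fun f"
           "K ` S \<subseteq> interior (eff_dom f)" "\<And>v. v \<in> S \<Longrightarrow> f (K v) > 0"
    and dom: "S \<inter> A -` eff_dom g \<noteq> {}"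
    and inf_pos: "(INF v\<in>S. g (A v) + ereal (h v)) > 0"
    and subg: "A ` S \<subseteq> subdiff_dom g" "ell > 0" "\<And>v. v \<in> S \<Longrightarrow> infdist 0 (subdiff g (A v)) \<le> ell"
    and par: "0 < \<beta>" "\<beta> < 2" "\<nu> > 0" "0 < q" "q < 1" "\<delta> 0 > 0" "\<theta> 0 > 0" "\<gamma>s 0 = 1" "\<epsilon> > 0"
    and step_y: "\<And>k. y (Suc k) \<in> subdiff f (K (x k))"
    and step_x: "\<And>k. x (Suc k) = closest_point S
                   (u k + (\<theta> k / \<delta> k) *\<^sub>R adjoint K (y (Suc k)) - (1 / \<delta> k) *\<^sub>R gradh (x k)
                    - (1 / \<delta> k) *\<^sub>R adjoint A (z k))"
    and step_u: "\<And>k. u (Suc k) = (1 - \<beta>) *\<^sub>R u k + \<beta> *\<^sub>R x (Suc k)"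
    and step_z: "\<And>k. let gj = (\<lambda>j. \<gamma>s k * q ^ j);
                         zc = (\<lambda>j. prox (fconj g) (1 / gj j) ((1 / gj j) *\<^sub>R A (x (Suc k))));
                         P = (\<lambda>j. Psi S A g h (x (Suc k)) (zc j) (u (Suc k)) (\<delta> k) (gj j)
                                    / f (K (x (Suc k))))
                     in P (jj k) > 0 \<and> (\<forall>j < jj k. \<not> P j > 0)
                        \<and> ereal (\<theta> (Suc k)) = P (jj k)
                        \<and> z (Suc k) = zc (jj k)
                        \<and> \<gamma>s (Suc k) = (if norm (z (Suc k)) > min (\<epsilon> / gj (jj k)) (sqrt (2 * \<epsilon> / gj (jj k)))
                                         then gj (jj k) * q else gj (jj k))
                        \<and> \<delta> (Suc k) = 2 * \<nu> + L + 2 * (onorm A)\<^sup>2 / \<gamma>s (Suc k)"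
    and gam: "\<gamma> > 0"
    and tail: "\<And>k. k \<ge> K0 \<Longrightarrow> \<gamma>s k = \<gamma> \<and> \<delta> k = 2 * \<nu> + L + 2 * (onorm A)\<^sup>2 / \<gamma>
                  \<and> norm (z (Suc k)) \<le> min (\<epsilon> / \<gamma>) (sqrt (2 * \<epsilon> / \<gamma>))"
  shows "\<forall>k \<ge> K0 + 1.
    (let d = 2 * \<nu> + L + 2 * (onorm A)\<^sup>2 / \<gamma>;
         c1 = \<nu>; c2 = d * (2 - \<beta>) / (2 * \<beta>); c3 = \<gamma> / 2;
         D = c1 * (norm (x k - x (Suc k)))\<^sup>2 + c2 * (norm (u k - u (Suc k)))\<^sup>2
             + c3 * (norm (z k - z (Suc k)))\<^sup>2
     in Psi S A g h (x (Suc k)) (z (Suc k)) (u (Suc k)) d \<gamma>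
          + ereal (\<theta> k) * f (K (x k))
          - ereal (\<theta> k) * (ereal (inner (K (x (Suc k))) (y (Suc k))) - fconj f (y (Suc k)))
        \<le> Psi S A g h (x k) (z k) (u k) d \<gamma> - ereal D
      \<and> Psi S A g h (x (Suc k)) (z (Suc k)) (u (Suc k)) d \<gamma> - ereal (\<theta> k) * f (K (x (Suc k)))
        \<le> - ereal D)"
proof (intro allI impI)
  define d where "d = 2 * \<nu> + L + 2 * (onorm A)\<^sup>2 / \<gamma>"
  have clS: "closed S" using S(3) by (rule compact_imp_closed)
  have L0: "0 \<le> L" using h(4) by (simp add: lipschitz_on_def)
  have dpos: "0 < d" using L0 par(3) gam unfolding d_def by (smt (verit) divide_nonneg_pos zero_le_power2)
  have dL: "2 * \<nu> \<le> d - L" using gam unfolding d_def by simp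
  have xS: "x (Suc m) \<in> S" for m unfolding step_x[of m] using clS S(1) by (rule closest_point_in_set)
  have fpos: "\<exists>r. f (K v) = ereal r \<and> 0 < r" if "v \<in> S" for v
  proof -
    have "f (K v) < \<infinity>" using f(4) that interior_subset unfolding eff_dom_def by blast
    moreover have "0 < f (K v)" using f(5) that by simp
    ultimately show ?thesis by (cases "f (K v)") auto
  qed
  have Tm: "\<delta> m = d \<and> z (Suc m) = prox (fconj g) (1/\<gamma>) ((1/\<gamma>) *\<^sub>R A (x (Suc m)))
      \<and> ereal (\<theta> (Suc m)) = Psi S A g h (x (Suc m)) (z (Suc m)) (u (Suc m)) d \<gamma> / f (K (x (Suc m)))
      \<and> 0 < Psi S A g h (x (Suc m)) (z (Suc m)) (u (Suc m)) d \<gamma> / f (K (x (Suc m)))" if m: "K0 \<le> m" for m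
  proof -
    have t0: "\<gamma>s m = \<gamma>" "\<delta> m = d" using tail[OF m] unfolding d_def by auto
    have t1: "\<gamma>s (Suc m) = \<gamma>" using tail[of "Suc m"] m by auto
    define gg where "gg = \<gamma>s m * q ^ jj m"
    note sz = step_z[of m, unfolded Let_def, folded gg_def]
    have sz6: "\<gamma>s (Suc m) = (if norm (z (Suc m)) > min (\<epsilon> / gg) (sqrt (2 * \<epsilon> / gg)) then gg * q else gg)"
      using sz by blast
    have "gg = \<gamma>"
    proof (cases "norm (z (Suc m)) > min (\<epsilon> / gg) (sqrt (2 * \<epsilon> / gg))")
      case True
      hence "\<gamma> = gg * q" using sz6 t1 by simp
      hence "\<gamma> * 1 = \<gamma> * q ^ Suc (jj m)" unfolding gg_def t0 by (simp add: mult_ac)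
      hence "q ^ Suc (jj m) = 1" using gam by (metis mult_left_cancel less_irrefl)
      moreover have "q ^ Suc (jj m) < 1" using par(4,5) by (rule power_Suc_less_one)
      ultimately show ?thesis by simp
    next
      case False thus ?thesis using sz6 t1 by simp
    qed
    thus ?thesis using sz t0 by simp
  qed
  fix k assume k: "K0 + 1 \<le> k"
  then obtain m where km: "k = Suc m" and m: "K0 \<le> m" by (cases k) auto
  have Km: "K0 \<le> k" using k by simp
  note Tk = Tm[OF Km] and Tmm = Tm[OF m]
  have xkS: "x k \<in> S" and x1S: "x (Suc k) \<in> S" using xS km by auto
  obtain fk where fk: "f (K (x k)) = ereal fk" "0 < fk" using fpos[OF xkS] by blast
  obtain f1 where f1: "f (K (x (Suc k))) = ereal f1" "0 < f1" using fpos[OF x1S] by blast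
  have Pk: "Psi S A g h (x k) (z k) (u k) d \<gamma> = ereal (\<theta> k * fk)"
    using Tmm fk km by (intro ediv_eq) auto
  have thpos: "0 < \<theta> k" using Tmm fk km by (metis ereal_less(2) zero_ereal_def)
  have P1: "Psi S A g h (x (Suc k)) (z (Suc k)) (u (Suc k)) d \<gamma> = ereal (\<theta> (Suc k) * f1)"
    using Tk f1 by (intro ediv_eq) auto
  obtain Gk where Gk: "fconj g (z k) = ereal Gk"
  proof -
    have "fconj g (z k) \<noteq> -\<infinity>" by (rule fconj_nm[OF g(1)])
    moreover have "fconj g (z k) \<noteq> \<infinity>" using Pk xkS unfolding Psi_def by auto
    ultimately show ?thesis using that by (cases "fconj g (z k)") auto
  qed
  have zdef: "z (Suc k) = prox (fconj g) (1/\<gamma>) ((1/\<gamma>) *\<^sub>R A (x (Suc k)))" using Tk by simp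
  have kap: "0 < 1/\<gamma>" using gam by simp
  have mn: "\<And>w. fconj g (z (Suc k)) + ereal ((norm (z (Suc k) - (1/\<gamma>) *\<^sub>R A (x (Suc k))))\<^sup>2 / (2 * (1/\<gamma>)))
     \<le> fconj g w + ereal ((norm (w - (1/\<gamma>) *\<^sub>R A (x (Suc k))))\<^sup>2 / (2 * (1/\<gamma>)))"
    unfolding zdef using prox_min[OF g(1) kap, of "z k"] Gk by simp
  obtain G1 where G1: "fconj g (z (Suc k)) = ereal G1"
    and strong0: "G1 + (norm (z (Suc k) - (1/\<gamma>) *\<^sub>R A (x (Suc k))))\<^sup>2 / (2 * (1/\<gamma>))
        + (norm (z k - z (Suc k)))\<^sup>2 / (2 * (1/\<gamma>))
       \<le> Gk + (norm (z k - (1/\<gamma>) *\<^sub>R A (x (Suc k))))\<^sup>2 / (2 * (1/\<gamma>))"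
    using prox_strong[OF g(1) kap mn Gk] by blast
  have F1: "G1 + \<gamma>/2 * (norm (z (Suc k)))\<^sup>2 - inner (z (Suc k)) (A (x (Suc k))) + \<gamma>/2 * (norm (z k - z (Suc k)))\<^sup>2
      \<le> Gk + \<gamma>/2 * (norm (z k))\<^sup>2 - inner (z k) (A (x (Suc k)))"
  proof -
    have e: "\<And>t. t / (2 * (1/\<gamma>)) = \<gamma>/2 * t" by simp
    have s1: "(norm (z (Suc k) - (1/\<gamma>) *\<^sub>R A (x (Suc k))))\<^sup>2 / (2 * (1/\<gamma>))
       = \<gamma>/2 * (norm (z (Suc k)))\<^sup>2 - inner (z (Suc k)) (A (x (Suc k))) + (norm (A (x (Suc k))))\<^sup>2 / (2 * \<gamma>)"
      by (rule sq_prox[OF gam])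
    have s2: "(norm (z k - (1/\<gamma>) *\<^sub>R A (x (Suc k))))\<^sup>2 / (2 * (1/\<gamma>))
       = \<gamma>/2 * (norm (z k))\<^sup>2 - inner (z k) (A (x (Suc k))) + (norm (A (x (Suc k))))\<^sup>2 / (2 * \<gamma>)"
      by (rule sq_prox[OF gam])
    have s3: "(norm (z k - z (Suc k)))\<^sup>2 / (2 * (1/\<gamma>)) = \<gamma>/2 * (norm (z k - z (Suc k)))\<^sup>2" by (rule e)
    show ?thesis using strong0 unfolding s1 s2 s3 by linarith
  qed
  have zkdef: "z k = prox (fconj g) (1/\<gamma>) ((1/\<gamma>) *\<^sub>R A (x k))" using Tmm km by simp
  have mnk: "\<And>w. fconj g (z k) + ereal ((norm (z k - (1/\<gamma>) *\<^sub>R A (x k)))\<^sup>2 / (2 * (1/\<gamma>)))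
     \<le> fconj g w + ereal ((norm (w - (1/\<gamma>) *\<^sub>R A (x k)))\<^sup>2 / (2 * (1/\<gamma>)))"
  proof -
    fix w
    have w0: "fconj g (z k) \<noteq> \<infinity>" using Gk by simp
    show "?thesis w" using prox_min[OF g(1) kap w0, of "(1/\<gamma>) *\<^sub>R A (x k)" w] unfolding zkdef[symmetric] .
  qed
  obtain Gk' where Gk': "fconj g (z k) = ereal Gk'"
    and strongk: "Gk' + (norm (z k - (1/\<gamma>) *\<^sub>R A (x k)))\<^sup>2 / (2 * (1/\<gamma>))
        + (norm (z (Suc k) - z k))\<^sup>2 / (2 * (1/\<gamma>))
       \<le> G1 + (norm (z (Suc k) - (1/\<gamma>) *\<^sub>R A (x k)))\<^sup>2 / (2 * (1/\<gamma>))"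
    using prox_strong[OF g(1) kap mnk G1] by blast
  have "Gk' = Gk" using Gk Gk' by simp
  have F1': "Gk + \<gamma>/2 * (norm (z k))\<^sup>2 - inner (z k) (A (x k)) + \<gamma>/2 * (norm (z k - z (Suc k)))\<^sup>2
      \<le> G1 + \<gamma>/2 * (norm (z (Suc k)))\<^sup>2 - inner (z (Suc k)) (A (x k))"
  proof -
    have e: "\<And>t. t / (2 * (1/\<gamma>)) = \<gamma>/2 * t" by simp
    have s1: "(norm (z (Suc k) - (1/\<gamma>) *\<^sub>R A (x k)))\<^sup>2 / (2 * (1/\<gamma>))
       = \<gamma>/2 * (norm (z (Suc k)))\<^sup>2 - inner (z (Suc k)) (A (x k)) + (norm (A (x k)))\<^sup>2 / (2 * \<gamma>)"
      by (rule sq_prox[OF gam])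
    have s2: "(norm (z k - (1/\<gamma>) *\<^sub>R A (x k)))\<^sup>2 / (2 * (1/\<gamma>))
       = \<gamma>/2 * (norm (z k))\<^sup>2 - inner (z k) (A (x k)) + (norm (A (x k)))\<^sup>2 / (2 * \<gamma>)"
      by (rule sq_prox[OF gam])
    have s3: "(norm (z (Suc k) - z k))\<^sup>2 / (2 * (1/\<gamma>)) = \<gamma>/2 * (norm (z k - z (Suc k)))\<^sup>2"
      by (simp add: norm_minus_commute)
    show ?thesis using strongk \<open>Gk' = Gk\<close> unfolding s1 s2 s3 by linarith
  qed
  have Tb: "inner (z (Suc k)) (A (x (Suc k))) - inner (z (Suc k)) (A (x k)) - inner (z k) (A (x (Suc k))) + inner (z k) (A (x k))
     \<le> (onorm A)\<^sup>2 / \<gamma> * (norm (x k - x (Suc k)))\<^sup>2"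
  proof -
    let ?t = "inner (z (Suc k) - z k) (A (x (Suc k)) - A (x k))"
    have te: "?t = inner (z (Suc k)) (A (x (Suc k))) - inner (z (Suc k)) (A (x k)) - inner (z k) (A (x (Suc k))) + inner (z k) (A (x k))"
      by (simp add: inner_diff_left inner_diff_right)
    have n: "(norm (z k - z (Suc k)))\<^sup>2 = (norm (z (Suc k) - z k))\<^sup>2" by (simp add: norm_minus_commute)
    have 1: "\<gamma> * (norm (z (Suc k) - z k))\<^sup>2 \<le> ?t" using F1 F1' unfolding te n by linarith
    have 2: "?t \<le> norm (z (Suc k) - z k) * norm (A (x (Suc k)) - A (x k))" by (rule norm_cauchy_schwarz)
    have "A (x (Suc k)) - A (x k) = A (x (Suc k) - x k)" by (simp add: linear_diff[OF lin(1)])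
    hence 3: "norm (A (x (Suc k)) - A (x k)) \<le> onorm A * norm (x k - x (Suc k))"
      using onorm[of A "x (Suc k) - x k"] lin(1) by (simp add: linear_conv_bounded_linear norm_minus_commute)
    have "?t \<le> (onorm A * norm (x k - x (Suc k)))\<^sup>2 / \<gamma>"
      by (rule cross_bound[OF gam 1 2 3]) auto
    thus ?thesis unfolding te by (simp add: power_mult_distrib)
  qed
  have F2: "h (x (Suc k)) \<le> h (x k) + inner (gradh (x k)) (x (Suc k) - x k) + L/2 * (norm (x (Suc k) - x k))\<^sup>2"
    by (rule descent_lemma[OF S(2) h(2) h(3) h(4) xkS x1S])
  have dk: "\<delta> k = d" using Tk by simp
  let ?w = "x k - x (Suc k)"
  have F3: "d * inner (u k - x (Suc k)) (x k - x (Suc k)) + \<theta> k * inner (K (x k)) (y (Suc k))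
     - \<theta> k * inner (K (x (Suc k))) (y (Suc k)) + inner (gradh (x k)) (x (Suc k) - x k)
     - inner (z k) (A (x k)) + inner (z k) (A (x (Suc k))) \<le> 0"
  proof -
    let ?v = "u k + (\<theta> k / \<delta> k) *\<^sub>R adjoint K (y (Suc k)) - (1 / \<delta> k) *\<^sub>R gradh (x k) - (1 / \<delta> k) *\<^sub>R adjoint A (z k)"
    have cp: "inner (?v - x (Suc k)) ?w \<le> 0"
      using closest_point_dot[OF S(2) clS xkS, of ?v] step_x[of k] by simp
    have a: "inner (adjoint K (y (Suc k))) ?w = inner (K (x k)) (y (Suc k)) - inner (K (x (Suc k))) (y (Suc k))"
    proof -
      have "inner (adjoint K (y (Suc k))) ?w = inner ?w (adjoint K (y (Suc k)))" by (rule inner_commute)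
      also have "\<dots> = inner (K ?w) (y (Suc k))" by (rule adjoint_works[OF lin(2)])
      also have "K ?w = K (x k) - K (x (Suc k))" by (rule linear_diff[OF lin(2)])
      finally show ?thesis by (simp add: inner_diff_left)
    qed
    have b: "inner (adjoint A (z k)) ?w = inner (z k) (A (x k)) - inner (z k) (A (x (Suc k)))"
    proof -
      have "inner (adjoint A (z k)) ?w = inner ?w (adjoint A (z k))" by (rule inner_commute)
      also have "\<dots> = inner (A ?w) (z k)" by (rule adjoint_works[OF lin(1)])
      also have "A ?w = A (x k) - A (x (Suc k))" by (rule linear_diff[OF lin(1)])
      finally show ?thesis by (simp add: inner_diff_left inner_commute[of "A _" "z k"])
    qed
    have c: "inner (gradh (x k)) ?w = - inner (gradh (x k)) (x (Suc k) - x k)"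
      by (simp add: inner_diff_right)
    have "inner (?v - x (Suc k)) ?w = inner (u k - x (Suc k)) ?w + (\<theta> k / d) * inner (adjoint K (y (Suc k))) ?w
        - (1/d) * inner (gradh (x k)) ?w - (1/d) * inner (adjoint A (z k)) ?w"
      unfolding dk by (simp add: inner_diff_left inner_add_left algebra_simps)
    also have "\<dots> = (1/d) * (d * inner (u k - x (Suc k)) (x k - x (Suc k)) + \<theta> k * inner (K (x k)) (y (Suc k))
     - \<theta> k * inner (K (x (Suc k))) (y (Suc k)) + inner (gradh (x k)) (x (Suc k) - x k)
     - inner (z k) (A (x k)) + inner (z k) (A (x (Suc k))))"
      unfolding a b c using dpos by (simp add: field_simps)
    finally have "(1/d) * (d * inner (u k - x (Suc k)) (x k - x (Suc k)) + \<theta> k * inner (K (x k)) (y (Suc k))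
     - \<theta> k * inner (K (x (Suc k))) (y (Suc k)) + inner (gradh (x k)) (x (Suc k) - x k)
     - inner (z k) (A (x k)) + inner (z k) (A (x (Suc k)))) \<le> 0" using cp by simp
    thus ?thesis using dpos by (simp add: divide_le_0_iff)
  qed
  have F4: "d/2 * (norm (x (Suc k) - u (Suc k)))\<^sup>2 = d/2 * (norm (x (Suc k) - u k))\<^sup>2 - (d * (2 - \<beta>) / (2 * \<beta>)) * (norm (u k - u (Suc k)))\<^sup>2"
  proof -
    have e1: "x (Suc k) - u (Suc k) = (1 - \<beta>) *\<^sub>R (x (Suc k) - u k)" unfolding step_u by (simp add: algebra_simps)
    have e2: "u k - u (Suc k) = (- \<beta>) *\<^sub>R (x (Suc k) - u k)" unfolding step_u by (simp add: algebra_simps)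
    have n1: "(norm (x (Suc k) - u (Suc k)))\<^sup>2 = (1 - \<beta>)\<^sup>2 * (norm (x (Suc k) - u k))\<^sup>2"
      unfolding e1 by (simp add: power_mult_distrib)
    have n2: "(norm (u k - u (Suc k)))\<^sup>2 = \<beta>\<^sup>2 * (norm (x (Suc k) - u k))\<^sup>2"
      unfolding e2 by (simp add: power_mult_distrib)
    show ?thesis unfolding n1 n2 using par(1) by (simp add: field_simps power2_eq_square)
  qed
  have F5: "(norm (x (Suc k) - u k))\<^sup>2 = (norm (x k - u k))\<^sup>2 + 2 * inner (x k - u k) (x (Suc k) - x k) + (norm (x k - x (Suc k)))\<^sup>2"
    using norm_add_sq[of "x k - u k" "x (Suc k) - x k"] by (simp add: norm_minus_commute)
  have F6: "inner (u k - x (Suc k)) (x k - x (Suc k)) = (norm (x k - x (Suc k)))\<^sup>2 + inner (x k - u k) (x (Suc k) - x k)"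
    by (simp add: inner_diff_left inner_diff_right inner_commute power2_norm_eq_inner algebra_simps)
  have F2': "h (x (Suc k)) \<le> h (x k) + inner (gradh (x k)) (x (Suc k) - x k) + L/2 * (norm (x k - x (Suc k)))\<^sup>2"
    using F2 by (simp add: norm_minus_commute)
  have Pk': "Psi S A g h (x k) (z k) (u k) d \<gamma> = ereal (inner (z k) (A (x k)) + h (x k) + d/2 * (norm (x k - u k))\<^sup>2 - \<gamma>/2 * (norm (z k))\<^sup>2 - Gk)"
    by (simp add: Psi_def xkS Gk)
  have P1': "Psi S A g h (x (Suc k)) (z (Suc k)) (u (Suc k)) d \<gamma> = ereal (inner (z (Suc k)) (A (x (Suc k))) + h (x (Suc k)) + d/2 * (norm (x (Suc k) - u (Suc k)))\<^sup>2 - \<gamma>/2 * (norm (z (Suc k)))\<^sup>2 - G1)"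
    by (simp add: Psi_def x1S G1)
  have PkR: "inner (z k) (A (x k)) + h (x k) + d/2 * (norm (x k - u k))\<^sup>2 - \<gamma>/2 * (norm (z k))\<^sup>2 - Gk = \<theta> k * fk"
    using Pk Pk' by simp
  have fcf: "fconj f (y (Suc k)) = ereal (inner (y (Suc k)) (K (x k)) - fk)"
    by (rule fconj_subgrad[OF step_y fk(1)])
  have FY: "inner (y (Suc k)) (K (x (Suc k))) - f1 \<le> inner (y (Suc k)) (K (x k)) - fk"
    using fy[of "y (Suc k)" "K (x (Suc k))" f] f1 fcf by simp
  have FYt: "\<theta> k * inner (y (Suc k)) (K (x (Suc k))) - \<theta> k * f1 \<le> \<theta> k * inner (y (Suc k)) (K (x k)) - \<theta> k * fk"
    using mult_left_mono[OF FY, of "\<theta> k"] thpos by (simp add: algebra_simps)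
  have dF5: "d/2 * (norm (x (Suc k) - u k))\<^sup>2 = d/2 * (norm (x k - u k))\<^sup>2 + d * inner (x k - u k) (x (Suc k) - x k) + d/2 * (norm (x k - x (Suc k)))\<^sup>2"
    unfolding F5 by (simp add: algebra_simps)
  have dF6: "d * inner (u k - x (Suc k)) (x k - x (Suc k)) = d * (norm (x k - x (Suc k)))\<^sup>2 + d * inner (x k - u k) (x (Suc k) - x k)"
    unfolding F6 by (simp add: algebra_simps)
  have F7': "\<nu> * (norm (x k - x (Suc k)))\<^sup>2 + L/2 * (norm (x k - x (Suc k)))\<^sup>2 + d/2 * (norm (x k - x (Suc k)))\<^sup>2 + (onorm A)\<^sup>2 / \<gamma> * (norm (x k - x (Suc k)))\<^sup>2 = d * (norm (x k - x (Suc k)))\<^sup>2"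
    unfolding d_def using gam by (simp add: field_simps)
  have ic: "inner (y (Suc k)) (K (x k)) = inner (K (x k)) (y (Suc k))" "inner (y (Suc k)) (K (x (Suc k))) = inner (K (x (Suc k))) (y (Suc k))"
    by (simp_all add: inner_commute)
  define Dv where "Dv = \<nu> * (norm (x k - x (Suc k)))\<^sup>2 + (d * (2 - \<beta>) / (2 * \<beta>)) * (norm (u k - u (Suc k)))\<^sup>2 + \<gamma> / 2 * (norm (z k - z (Suc k)))\<^sup>2"
  have ex: "\<theta> k * (inner (K (x (Suc k))) (y (Suc k)) - (inner (y (Suc k)) (K (x k)) - fk))
     = \<theta> k * inner (K (x (Suc k))) (y (Suc k)) - \<theta> k * inner (K (x k)) (y (Suc k)) + \<theta> k * fk"
    unfolding ic by (simp add: algebra_simps)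
  have R1: "inner (z (Suc k)) (A (x (Suc k))) + h (x (Suc k)) + d/2 * (norm (x (Suc k) - u (Suc k)))\<^sup>2 - \<gamma>/2 * (norm (z (Suc k)))\<^sup>2 - G1
     + \<theta> k * fk - \<theta> k * (inner (K (x (Suc k))) (y (Suc k)) - (inner (y (Suc k)) (K (x k)) - fk)) \<le> \<theta> k * fk - Dv"
    unfolding ex Dv_def using F1' Tb F2' F3 F4 dF5 dF6 F7' PkR by linarith
  have R2: "inner (z (Suc k)) (A (x (Suc k))) + h (x (Suc k)) + d/2 * (norm (x (Suc k) - u (Suc k)))\<^sup>2 - \<gamma>/2 * (norm (z (Suc k)))\<^sup>2 - G1
     - \<theta> k * f1 \<le> - Dv"
    using R1[unfolded ex] FYt[unfolded ic] by linarith
  show "(let d = 2 * \<nu> + L + 2 * (onorm A)\<^sup>2 / \<gamma>;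
         c1 = \<nu>; c2 = d * (2 - \<beta>) / (2 * \<beta>); c3 = \<gamma> / 2;
         D = c1 * (norm (x k - x (Suc k)))\<^sup>2 + c2 * (norm (u k - u (Suc k)))\<^sup>2
             + c3 * (norm (z k - z (Suc k)))\<^sup>2
     in Psi S A g h (x (Suc k)) (z (Suc k)) (u (Suc k)) d \<gamma>
          + ereal (\<theta> k) * f (K (x k))
          - ereal (\<theta> k) * (ereal (inner (K (x (Suc k))) (y (Suc k))) - fconj f (y (Suc k)))
        \<le> Psi S A g h (x k) (z k) (u k) d \<gamma> - ereal D
      \<and> Psi S A g h (x (Suc k)) (z (Suc k)) (u (Suc k)) d \<gamma> - ereal (\<theta> k) * f (K (x (Suc k)))
        \<le> - ereal D)"
    unfolding Let_def d_def[symmetric] Dv_def[symmetric] P1' Pk fk(1) f1(1) fcf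
    using R1 R2 by simp
qed

end
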